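(* Let $\mathcal{C}$ be a category, let $\mathcal{M}$ be a class of morphisms of $\mathcal{C}$, and let $T$ be an object of $\mathcal{C}$. Let $\mathcal{M}/T$ be the category whose objects are pairs $(S,s)$ with $s : S \to T$ in $\mathcal{M}$ and whose morphisms $f:(S,s)\to(S',s')$ are morphisms $f:S\to S'$ of $\mathcal{C}$ with $s'\circ f = s$. Define $T_{\mathcal{M}} : \mathcal{M}/T \to \mathcal{C}$ by $T_{\mathcal{M}}(S,s) = S$, $T_{\mathcal{M}}f = f$, and $\tau_{(S,s)} = s$. Then $(\mathcal{M}/T, T_{\mathcal{M}}, \tau)$ is an $\mathcal{M}$-grading of $T$, and it is a pseudoterminal object of the 2-category $\mathrm{Grade}_{\mathcal{M}}(T)$. Explicitly, for every $\mathcal{M}$-grading $(\mathcal{G},G,g)$ of $T$: (i) there exists a morphism of $\mathcal{M}$-gradings $(F,f) : (\mathcal{G},G,g) \to (\mathcal{M}/T, T_{\mathcal{M}}, \tau)$; and (ii) this morphism is essentially unique, in the sense that there is an assignment, natural in $(F',f')$, of an invertible 2-cell $(F',f') \cong (F,f)$ to every morphism of $\mathcal{M}$-gradings $(F',f') : (\mathcal{G},G,g) \to (\mathcal{M}/T, T_{\mathcal{M}}, \tau)$.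
   Context: An $\mathcal{M}$-grading $(\mathcal{G},G,g)$ of an object $T$ of $\mathcal{C}$ consists of a category $\mathcal{G}$, a functor $G:\mathcal{G}\to\mathcal{C}$, and a natural transformation with components $g_d : Gd \to T$ (i.e. a cocone from $G$ to $T$) all of which lie in $\mathcal{M}$. A morphism $(F,f):(\mathcal{G},G,g)\to(\mathcal{G}',G',g')$ is a functor $F:\mathcal{G}\to\mathcal{G}'$ together with a natural isomorphism $f : G'\cdot F \cong G$ such that $g_d\circ f_d = g'_{Fd}$ for all $d$. A 2-cell $\beta:(F,f)\Rightarrow(F',f')$ is a natural transformation $\beta:F\Rightarrow F'$ with $f'\circ(G'\cdot\beta) = f$. These data form the 2-category $\mathrm{Grade}_{\mathcal{M}}(T)$. *)

theory Defs
  imports Main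
begin

record ('o, 'm) cat =
  Ob   :: "'o set"
  Ar   :: "'m set"
  Dom  :: "'m \<Rightarrow> 'o"
  Cod  :: "'m \<Rightarrow> 'o"
  Idt  :: "'o \<Rightarrow> 'm"
  Comp :: "'m \<Rightarrow> 'm \<Rightarrow> 'm"   (* Comp C g f = g \<circ> f *)

definition hom :: "('o, 'm) cat \<Rightarrow> 'o \<Rightarrow> 'o \<Rightarrow> 'm set" where
  "hom C a b = {f \<in> Ar C. Dom C f = a \<and> Cod C f = b}"

definition category :: "('o, 'm) cat \<Rightarrow> bool" where
  "category C \<longleftrightarrow>
     (\<forall>f \<in> Ar C. Dom C f \<in> Ob C \<and> Cod C f \<in> Ob C) \<and>
     (\<forall>a \<in> Ob C. Idt C a \<in> hom C a a) \<and>
     (\<forall>f \<in> Ar C. \<forall>g \<in> Ar C. Cod C f = Dom C g \<longrightarrow>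
         Comp C g f \<in> hom C (Dom C f) (Cod C g)) \<and>
     (\<forall>f \<in> Ar C. Comp C (Idt C (Cod C f)) f = f \<and> Comp C f (Idt C (Dom C f)) = f) \<and>
     (\<forall>f \<in> Ar C. \<forall>g \<in> Ar C. \<forall>h \<in> Ar C. Cod C f = Dom C g \<longrightarrow> Cod C g = Dom C h \<longrightarrow>
         Comp C h (Comp C g f) = Comp C (Comp C h g) f)"

definition iso :: "('o, 'm) cat \<Rightarrow> 'm \<Rightarrow> bool" where
  "iso C f \<longleftrightarrow> f \<in> Ar C \<and>
     (\<exists>g \<in> hom C (Cod C f) (Dom C f).
        Comp C g f = Idt C (Dom C f) \<and> Comp C f g = Idt C (Cod C f))"

definition is_functor :: "('o, 'm) cat \<Rightarrow> ('p, 'n) cat \<Rightarrow> ('o \<Rightarrow> 'p) \<Rightarrow> ('m \<Rightarrow> 'n) \<Rightarrow> bool" where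
  "is_functor C D Fo Fm \<longleftrightarrow> category C \<and> category D \<and>
     (\<forall>a \<in> Ob C. Fo a \<in> Ob D) \<and>
     (\<forall>f \<in> Ar C. Fm f \<in> hom D (Fo (Dom C f)) (Fo (Cod C f))) \<and>
     (\<forall>a \<in> Ob C. Fm (Idt C a) = Idt D (Fo a)) \<and>
     (\<forall>f \<in> Ar C. \<forall>g \<in> Ar C. Cod C f = Dom C g \<longrightarrow>
         Fm (Comp C g f) = Comp D (Fm g) (Fm f))"

definition nat_trans ::
  "('o, 'm) cat \<Rightarrow> ('p, 'n) cat \<Rightarrow> ('o \<Rightarrow> 'p) \<Rightarrow> ('m \<Rightarrow> 'n) \<Rightarrow> ('o \<Rightarrow> 'p) \<Rightarrow> ('m \<Rightarrow> 'n)
     \<Rightarrow> ('o \<Rightarrow> 'n) \<Rightarrow> bool" where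
  "nat_trans C D Fo Fm Go Gm eta \<longleftrightarrow> is_functor C D Fo Fm \<and> is_functor C D Go Gm \<and>
     (\<forall>a \<in> Ob C. eta a \<in> hom D (Fo a) (Go a)) \<and>
     (\<forall>f \<in> Ar C. Comp D (eta (Cod C f)) (Fm f) = Comp D (Gm f) (eta (Dom C f)))"

definition nat_iso ::
  "('o, 'm) cat \<Rightarrow> ('p, 'n) cat \<Rightarrow> ('o \<Rightarrow> 'p) \<Rightarrow> ('m \<Rightarrow> 'n) \<Rightarrow> ('o \<Rightarrow> 'p) \<Rightarrow> ('m \<Rightarrow> 'n)
     \<Rightarrow> ('o \<Rightarrow> 'n) \<Rightarrow> bool" where
  "nat_iso C D Fo Fm Go Gm eta \<longleftrightarrow> nat_trans C D Fo Fm Go Gm eta \<and> (\<forall>a \<in> Ob C. iso D (eta a))"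

definition grading ::
  "('o, 'm) cat \<Rightarrow> 'm set \<Rightarrow> 'o \<Rightarrow> ('a, 'b) cat \<Rightarrow> ('a \<Rightarrow> 'o) \<Rightarrow> ('b \<Rightarrow> 'm) \<Rightarrow> ('a \<Rightarrow> 'm) \<Rightarrow> bool" where
  "grading C M T Gr Go Gm g \<longleftrightarrow> is_functor Gr C Go Gm \<and> T \<in> Ob C \<and>
     (\<forall>d \<in> Ob Gr. g d \<in> hom C (Go d) T \<and> g d \<in> M) \<and>
     (\<forall>u \<in> Ar Gr. Comp C (g (Cod Gr u)) (Gm u) = g (Dom Gr u))"

definition grading_mor ::
  "('o, 'm) cat \<Rightarrow> ('a, 'b) cat \<Rightarrow> ('a \<Rightarrow> 'o) \<Rightarrow> ('b \<Rightarrow> 'm) \<Rightarrow> ('a \<Rightarrow> 'm) \<Rightarrow>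
   ('c, 'e) cat \<Rightarrow> ('c \<Rightarrow> 'o) \<Rightarrow> ('e \<Rightarrow> 'm) \<Rightarrow> ('c \<Rightarrow> 'm) \<Rightarrow>
   ('a \<Rightarrow> 'c) \<Rightarrow> ('b \<Rightarrow> 'e) \<Rightarrow> ('a \<Rightarrow> 'm) \<Rightarrow> bool" where
  "grading_mor C Gr Go Gm g Gr' Go' Gm' g' Fo Fm f \<longleftrightarrow>
     is_functor Gr Gr' Fo Fm \<and>
     nat_iso Gr C (Go' \<circ> Fo) (Gm' \<circ> Fm) Go Gm f \<and>
     (\<forall>d \<in> Ob Gr. Comp C (g d) (f d) = g' (Fo d))"

definition grading_2cell ::
  "('o, 'm) cat \<Rightarrow> ('a, 'b) cat \<Rightarrow> ('c, 'e) cat \<Rightarrow> ('e \<Rightarrow> 'm) \<Rightarrow>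
   ('a \<Rightarrow> 'c) \<Rightarrow> ('b \<Rightarrow> 'e) \<Rightarrow> ('a \<Rightarrow> 'm) \<Rightarrow>
   ('a \<Rightarrow> 'c) \<Rightarrow> ('b \<Rightarrow> 'e) \<Rightarrow> ('a \<Rightarrow> 'm) \<Rightarrow> ('a \<Rightarrow> 'e) \<Rightarrow> bool" where
  "grading_2cell C Gr Gr' Gm' Fo Fm f Fo' Fm' f' \<beta> \<longleftrightarrow>
     nat_trans Gr Gr' Fo Fm Fo' Fm' \<beta> \<and>
     (\<forall>d \<in> Ob Gr. Comp C (f' d) (Gm' (\<beta> d)) = f d)"

definition grading_inv_2cell ::
  "('o, 'm) cat \<Rightarrow> ('a, 'b) cat \<Rightarrow> ('c, 'e) cat \<Rightarrow> ('e \<Rightarrow> 'm) \<Rightarrow>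
   ('a \<Rightarrow> 'c) \<Rightarrow> ('b \<Rightarrow> 'e) \<Rightarrow> ('a \<Rightarrow> 'm) \<Rightarrow>
   ('a \<Rightarrow> 'c) \<Rightarrow> ('b \<Rightarrow> 'e) \<Rightarrow> ('a \<Rightarrow> 'm) \<Rightarrow> ('a \<Rightarrow> 'e) \<Rightarrow> bool" where
  "grading_inv_2cell C Gr Gr' Gm' Fo Fm f Fo' Fm' f' \<beta> \<longleftrightarrow>
     grading_2cell C Gr Gr' Gm' Fo Fm f Fo' Fm' f' \<beta> \<and>
     (\<exists>\<gamma>. grading_2cell C Gr Gr' Gm' Fo' Fm' f' Fo Fm f \<gamma> \<and>
        (\<forall>d \<in> Ob Gr. Comp Gr' (\<gamma> d) (\<beta> d) = Idt Gr' (Fo d) \<and>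
                      Comp Gr' (\<beta> d) (\<gamma> d) = Idt Gr' (Fo' d)))"

text \<open>Objects are pairs (S, s) with s : S \<rightarrow> T in M; an arrow f : (S,s) \<rightarrow> (S',s') is
  represented as the triple ((S,s), f, (S',s')).\<close>
definition slice :: "('o, 'm) cat \<Rightarrow> 'm set \<Rightarrow> 'o \<Rightarrow> ('o \<times> 'm, ('o \<times> 'm) \<times> 'm \<times> ('o \<times> 'm)) cat" where
  "slice C M T = \<lparr>
     Ob = {(S, s). s \<in> M \<and> s \<in> hom C S T},
     Ar = {((S, s), f, (S', s')). s \<in> M \<and> s \<in> hom C S T \<and> s' \<in> M \<and> s' \<in> hom C S' T \<and>
              f \<in> hom C S S' \<and> Comp C s' f = s},
     Dom = (\<lambda>(a, f, b). a),
     Cod = (\<lambda>(a, f, b). b),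
     Idt = (\<lambda>a. (a, Idt C (fst a), a)),
     Comp = (\<lambda>(b, g, c) (a, f, b'). (a, Comp C g f, c)) \<rparr>"

definition slice_Fo :: "'o \<times> 'm \<Rightarrow> 'o" where "slice_Fo = fst"
definition slice_Fm :: "('o \<times> 'm) \<times> 'm \<times> ('o \<times> 'm) \<Rightarrow> 'm" where "slice_Fm = (\<lambda>(a, f, b). f)"
definition slice_tau :: "'o \<times> 'm \<Rightarrow> 'm" where "slice_tau = snd"

end

theory Submission
  imports Defs
begin


lemma slice_Ob: "Ob (slice C M T) = {(S, s). s \<in> M \<and> s \<in> hom C S T}"
  by (simp add: slice_def)
lemma slice_Ar: "x \<in> Ar (slice C M T) \<longleftrightarrow> (\<exists>S s f S' s'. x = ((S, s), f, (S', s')) \<and>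
   s \<in> M \<and> s \<in> hom C S T \<and> s' \<in> M \<and> s' \<in> hom C S' T \<and> f \<in> hom C S S' \<and> Comp C s' f = s)"
  by (auto simp: slice_def)
lemma slice_Dom[simp]: "Dom (slice C M T) (a, f, b) = a" by (simp add: slice_def)
lemma slice_Cod[simp]: "Cod (slice C M T) (a, f, b) = b" by (simp add: slice_def)
lemma slice_Idt[simp]: "Idt (slice C M T) a = (a, Idt C (fst a), a)" by (simp add: slice_def)
lemma slice_Comp[simp]: "Comp (slice C M T) (b, g, c) (a, f, b') = (a, Comp C g f, c)" by (simp add: slice_def)

lemma cat_dom_cod: "category C \<Longrightarrow> f \<in> Ar C \<Longrightarrow> Dom C f \<in> Ob C \<and> Cod C f \<in> Ob C"
  by (simp add: category_def)
lemma cat_id: "category C \<Longrightarrow> a \<in> Ob C \<Longrightarrow> Idt C a \<in> hom C a a"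
  by (simp add: category_def)
lemma cat_comp: "category C \<Longrightarrow> f \<in> hom C a b \<Longrightarrow> g \<in> hom C b c \<Longrightarrow> Comp C g f \<in> hom C a c"
  unfolding category_def hom_def by auto
lemma cat_idl: "category C \<Longrightarrow> f \<in> hom C a b \<Longrightarrow> Comp C (Idt C b) f = f"
  unfolding category_def hom_def by auto
lemma cat_idr: "category C \<Longrightarrow> f \<in> hom C a b \<Longrightarrow> Comp C f (Idt C a) = f"
  unfolding category_def hom_def by auto
lemma cat_assoc: "category C \<Longrightarrow> f \<in> hom C a b \<Longrightarrow> g \<in> hom C b c \<Longrightarrow> h \<in> hom C c d \<Longrightarrow>
   Comp C h (Comp C g f) = Comp C (Comp C h g) f"
  unfolding category_def hom_def by auto

lemma hom_ob: "category C \<Longrightarrow> f \<in> hom C a b \<Longrightarrow> a \<in> Ob C \<and> b \<in> Ob C"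
  unfolding category_def hom_def by auto

lemma slice_cat: assumes C: "category C" shows "category (slice C M T)"
proof -
  let ?S = "slice C M T"
  have 1: "\<forall>f \<in> Ar ?S. Dom ?S f \<in> Ob ?S \<and> Cod ?S f \<in> Ob ?S"
    by (auto simp: slice_Ar slice_Ob)
  have 2: "\<forall>a \<in> Ob ?S. Idt ?S a \<in> hom ?S a a"
    using C by (auto simp: slice_Ob slice_Ar hom_def[of ?S] cat_idr dest: hom_ob intro: cat_id)
  have 3: "\<forall>f \<in> Ar ?S. \<forall>g \<in> Ar ?S. Cod ?S f = Dom ?S g \<longrightarrow> Comp ?S g f \<in> hom ?S (Dom ?S f) (Cod ?S g)"
  proof (intro ballI impI)
    fix f g assume f: "f \<in> Ar ?S" and g: "g \<in> Ar ?S" and e: "Cod ?S f = Dom ?S g"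
    from f obtain S s x S' s' where fx: "f = ((S, s), x, (S', s'))" "s \<in> M" "s \<in> hom C S T" "s' \<in> M"
      "s' \<in> hom C S' T" "x \<in> hom C S S'" "Comp C s' x = s" unfolding slice_Ar by blast
    from g obtain R r y R' r' where gy: "g = ((R, r), y, (R', r'))" "r \<in> M" "r \<in> hom C R T" "r' \<in> M"
      "r' \<in> hom C R' T" "y \<in> hom C R R'" "Comp C r' y = r" unfolding slice_Ar by blast
    have RS: "R = S'" "r = s'" using e fx gy by auto
    have "Comp C r' (Comp C y x) = s" using cat_assoc[OF C, of x S S' y R' r' T] fx gy RS by simp
    moreover have "Comp C y x \<in> hom C S R'" using cat_comp[OF C] fx gy RS by blast
    ultimately show "Comp ?S g f \<in> hom ?S (Dom ?S f) (Cod ?S g)"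
      using fx gy RS by (simp add: hom_def[of ?S] slice_Ar)
  qed
  have 4: "\<forall>f \<in> Ar ?S. Comp ?S (Idt ?S (Cod ?S f)) f = f \<and> Comp ?S f (Idt ?S (Dom ?S f)) = f"
    using C by (auto simp: slice_Ar intro: cat_idl cat_idr)
  have 5: "\<forall>f \<in> Ar ?S. \<forall>g \<in> Ar ?S. \<forall>h \<in> Ar ?S. Cod ?S f = Dom ?S g \<longrightarrow> Cod ?S g = Dom ?S h \<longrightarrow>
         Comp ?S h (Comp ?S g f) = Comp ?S (Comp ?S h g) f"
    using C by (auto simp: slice_Ar intro: cat_assoc)
  show ?thesis unfolding category_def using 1 2 3 4 5 by blast
qed

lemma slice_Ar_triple: "x \<in> Ar (slice C M T) \<Longrightarrow> x = (Dom (slice C M T) x, slice_Fm x, Cod (slice C M T) x)"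
  by (auto simp: slice_Ar slice_Fm_def)

lemma slice_hom_triple: "x \<in> hom (slice C M T) a b \<Longrightarrow> x = (a, slice_Fm x, b)"
  using slice_Ar_triple[of x C M T] by (auto simp: hom_def)

lemma slice_grading:
  assumes C: "category C" and T: "T \<in> Ob C"
  shows "grading C M T (slice C M T) slice_Fo slice_Fm slice_tau"
proof -
  let ?S = "slice C M T"
  have S: "category ?S" using slice_cat[OF C] .
  have f: "is_functor ?S C slice_Fo slice_Fm"
    unfolding is_functor_def
  proof (intro conjI ballI impI S C)
    fix a assume "a \<in> Ob ?S" then show "slice_Fo a \<in> Ob C"
      using C by (auto simp: slice_Ob slice_Fo_def dest: hom_ob)
  next
    fix f assume "f \<in> Ar ?S" then show "slice_Fm f \<in> hom C (slice_Fo (Dom ?S f)) (slice_Fo (Cod ?S f))"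
      by (auto simp: slice_Ar slice_Fo_def slice_Fm_def)
  next
    fix a assume "a \<in> Ob ?S" then show "slice_Fm (Idt ?S a) = Idt C (slice_Fo a)"
      by (auto simp: slice_Fo_def slice_Fm_def)
  next
    fix f g assume "f \<in> Ar ?S" "g \<in> Ar ?S" "Cod ?S f = Dom ?S g"
    then show "slice_Fm (Comp ?S g f) = Comp C (slice_Fm g) (slice_Fm f)"
      by (auto simp: slice_Ar slice_Fm_def)
  qed
  show ?thesis unfolding grading_def
    using f T by (auto simp: slice_Ob slice_Ar slice_Fo_def slice_Fm_def slice_tau_def)
qed

lemma inv_nat:
  assumes C: "category C" and a: "a \<in> hom C X Y" and a': "a' \<in> hom C Y X"
    and aa: "Comp C a a' = Idt C Y"
    and b: "b \<in> hom C X' Y'" and b': "b' \<in> hom C Y' X'" and bb: "Comp C b' b = Idt C X'"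
    and h: "h \<in> hom C X X'" and m: "m \<in> hom C Y Y'" and e: "Comp C b h = Comp C m a"
  shows "Comp C b' m = Comp C h a'"
proof -
  have "Comp C b' m = Comp C b' (Comp C m (Comp C a a'))" using aa cat_idr[OF C m] by simp
  also have "\<dots> = Comp C b' (Comp C (Comp C m a) a')" using cat_assoc[OF C a' a m] by simp
  also have "\<dots> = Comp C b' (Comp C (Comp C b h) a')" using e by simp
  also have "\<dots> = Comp C b' (Comp C b (Comp C h a'))" using cat_assoc[OF C a' h b] by simp
  also have "\<dots> = Comp C (Comp C b' b) (Comp C h a')"
    using cat_assoc[OF C cat_comp[OF C a' h] b b'] by simp
  also have "\<dots> = Comp C h a'" using bb cat_idl[OF C cat_comp[OF C a' h]] by simp
  finally show ?thesis .
qed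

definition canFo :: "('a \<Rightarrow> 'o) \<Rightarrow> ('a \<Rightarrow> 'm) \<Rightarrow> 'a \<Rightarrow> 'o \<times> 'm" where
  "canFo Go g = (\<lambda>d. (Go d, g d))"
definition canFm :: "('a, 'b) cat \<Rightarrow> ('a \<Rightarrow> 'o) \<Rightarrow> ('b \<Rightarrow> 'm) \<Rightarrow> ('a \<Rightarrow> 'm) \<Rightarrow> 'b \<Rightarrow> ('o \<times> 'm) \<times> 'm \<times> ('o \<times> 'm)" where
  "canFm Gr Go Gm g = (\<lambda>u. ((Go (Dom Gr u), g (Dom Gr u)), Gm u, (Go (Cod Gr u), g (Cod Gr u))))"
definition canf :: "('o, 'm) cat \<Rightarrow> ('a \<Rightarrow> 'o) \<Rightarrow> 'a \<Rightarrow> 'm" where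
  "canf C Go = (\<lambda>d. Idt C (Go d))"

lemma can_functor:
  assumes C: "category C" and G: "grading C M T Gr Go Gm g"
  shows "is_functor Gr (slice C M T) (canFo Go g) (canFm Gr Go Gm g)"
proof -
  let ?S = "slice C M T"
  have F: "is_functor Gr C Go Gm" and gd: "\<forall>d \<in> Ob Gr. g d \<in> hom C (Go d) T \<and> g d \<in> M"
    and gu: "\<forall>u \<in> Ar Gr. Comp C (g (Cod Gr u)) (Gm u) = g (Dom Gr u)"
    using G by (auto simp: grading_def)
  have Gr: "category Gr" using F by (simp add: is_functor_def)
  show ?thesis unfolding is_functor_def
  proof (intro conjI ballI impI Gr slice_cat[OF C])
    fix a assume "a \<in> Ob Gr" then show "canFo Go g a \<in> Ob ?S"
      using gd by (auto simp: slice_Ob canFo_def)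
  next
    fix u assume u: "u \<in> Ar Gr"
    then have "Dom Gr u \<in> Ob Gr" "Cod Gr u \<in> Ob Gr" using Gr by (auto simp: category_def)
    then show "canFm Gr Go Gm g u \<in> hom ?S (canFo Go g (Dom Gr u)) (canFo Go g (Cod Gr u))"
      using gd gu u F by (auto simp: slice_Ar hom_def[of ?S] canFo_def canFm_def is_functor_def)
  next
    fix a assume a: "a \<in> Ob Gr"
    then have "Idt Gr a \<in> hom Gr a a" using Gr by (simp add: category_def)
    then show "canFm Gr Go Gm g (Idt Gr a) = Idt ?S (canFo Go g a)"
      using a F by (auto simp: canFo_def canFm_def is_functor_def hom_def)
  next
    fix u v assume u: "u \<in> Ar Gr" and v: "v \<in> Ar Gr" and e: "Cod Gr u = Dom Gr v"
    then have "Comp Gr v u \<in> hom Gr (Dom Gr u) (Cod Gr v)" using Gr by (simp add: category_def)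
    then show "canFm Gr Go Gm g (Comp Gr v u) = Comp ?S (canFm Gr Go Gm g v) (canFm Gr Go Gm g u)"
      using u v e F by (auto simp: canFm_def is_functor_def hom_def)
  qed
qed

lemma id_iso: "category C \<Longrightarrow> a \<in> Ob C \<Longrightarrow> iso C (Idt C a)"
proof -
  assume C: "category C" and a: "a \<in> Ob C"
  have h: "Idt C a \<in> hom C a a" using cat_id[OF C a] .
  have "Comp C (Idt C a) (Idt C a) = Idt C a" by (rule cat_idl[OF C h])
  then show ?thesis using h unfolding iso_def by (auto simp: hom_def)
qed

lemma can_mor:
  assumes C: "category C" and G: "grading C M T Gr Go Gm g"
  shows "grading_mor C Gr Go Gm g (slice C M T) slice_Fo slice_Fm slice_tau
           (canFo Go g) (canFm Gr Go Gm g) (canf C Go)"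
proof -
  have F: "is_functor Gr C Go Gm" and gd: "\<forall>d \<in> Ob Gr. g d \<in> hom C (Go d) T \<and> g d \<in> M"
    using G by (auto simp: grading_def)
  have e1: "slice_Fo \<circ> canFo Go g = Go" by (simp add: fun_eq_iff slice_Fo_def canFo_def)
  have e2: "slice_Fm \<circ> canFm Gr Go Gm g = Gm" by (simp add: fun_eq_iff slice_Fm_def canFm_def)
  have nt: "nat_trans Gr C Go Gm Go Gm (canf C Go)"
    unfolding nat_trans_def
  proof (intro conjI ballI F)
    fix a assume "a \<in> Ob Gr" then show "canf C Go a \<in> hom C (Go a) (Go a)"
      using F C by (auto simp: canf_def is_functor_def intro: cat_id)
  next
    fix u assume "u \<in> Ar Gr"
    then have "Gm u \<in> hom C (Go (Dom Gr u)) (Go (Cod Gr u))" using F by (simp add: is_functor_def)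
    then show "Comp C (canf C Go (Cod Gr u)) (Gm u) = Comp C (Gm u) (canf C Go (Dom Gr u))"
      using C by (simp add: canf_def cat_idl cat_idr)
  qed
  have ni: "nat_iso Gr C Go Gm Go Gm (canf C Go)"
    unfolding nat_iso_def using nt F C by (auto simp: canf_def is_functor_def intro: id_iso)
  show ?thesis unfolding grading_mor_def e1 e2
    using can_functor[OF C G] ni gd C by (auto simp: canf_def canFo_def slice_tau_def cat_idr)
qed

lemma slice_Fm_simp[simp]: "slice_Fm (a, f, b) = f" by (simp add: slice_Fm_def)

lemma slice_Ar_mem: "s \<in> M \<Longrightarrow> s \<in> hom C S T \<Longrightarrow> s' \<in> M \<Longrightarrow> s' \<in> hom C S' T \<Longrightarrow>
   f \<in> hom C S S' \<Longrightarrow> Comp C s' f = s \<Longrightarrow> ((S, s), f, (S', s')) \<in> Ar (slice C M T)"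
  by (auto simp: slice_Ar)

lemma slice_Ar_props: "x \<in> Ar (slice C M T) \<Longrightarrow>
   slice_Fm x \<in> hom C (fst (Dom (slice C M T) x)) (fst (Cod (slice C M T) x)) \<and>
   Comp C (snd (Cod (slice C M T) x)) (slice_Fm x) = snd (Dom (slice C M T) x)"
  by (auto simp: slice_Ar)

lemma slice_Ob_props: "a \<in> Ob (slice C M T) \<Longrightarrow> snd a \<in> M \<and> snd a \<in> hom C (fst a) T"
  by (auto simp: slice_Ob)

lemma slice_hom_mem: "((S, s), f, (S', s')) \<in> Ar (slice C M T) \<Longrightarrow>
   ((S, s), f, (S', s')) \<in> hom (slice C M T) (S, s) (S', s')"
  by (simp add: hom_def)

lemma theta_inv:
  assumes C: "category C" and G: "grading C M T Gr Go Gm g"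
    and H: "grading_mor C Gr Go Gm g (slice C M T) slice_Fo slice_Fm slice_tau Fo' Fm' f'"
  shows "grading_inv_2cell C Gr (slice C M T) slice_Fm Fo' Fm' f'
           (canFo Go g) (canFm Gr Go Gm g) (canf C Go) (\<lambda>d. (Fo' d, f' d, canFo Go g d))"
proof -
  let ?S = "slice C M T"
  let ?Fo = "canFo Go g" and ?Fm = "canFm Gr Go Gm g" and ?f = "canf C Go"
  define \<theta> where "\<theta> = (\<lambda>d. (Fo' d, f' d, ?Fo d))"
  have F: "is_functor Gr C Go Gm" and gd: "\<forall>d \<in> Ob Gr. g d \<in> hom C (Go d) T \<and> g d \<in> M"
    using G by (auto simp: grading_def)
  have Gr: "category Gr" using F by (simp add: is_functor_def)
  have FF: "is_functor Gr ?S Fo' Fm'"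
    and NI: "nat_iso Gr C (slice_Fo \<circ> Fo') (slice_Fm \<circ> Fm') Go Gm f'"
    and tri: "\<forall>d \<in> Ob Gr. Comp C (g d) (f' d) = slice_tau (Fo' d)"
    using H by (auto simp: grading_mor_def)
  have FC: "is_functor Gr ?S ?Fo ?Fm" by (rule can_functor[OF C G])
  have fh: "\<forall>d \<in> Ob Gr. f' d \<in> hom C (fst (Fo' d)) (Go d)"
    using NI by (simp add: nat_iso_def nat_trans_def slice_Fo_def)
  have fiso: "\<forall>d \<in> Ob Gr. iso C (f' d)" using NI by (simp add: nat_iso_def)
  have fnat: "\<forall>u \<in> Ar Gr. Comp C (f' (Cod Gr u)) (slice_Fm (Fm' u)) = Comp C (Gm u) (f' (Dom Gr u))"
    using NI by (simp add: nat_iso_def nat_trans_def)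
  have Fo'ob: "\<forall>d \<in> Ob Gr. Fo' d \<in> Ob ?S" using FF by (simp add: is_functor_def)
  have Fm'h: "\<forall>u \<in> Ar Gr. Fm' u \<in> hom ?S (Fo' (Dom Gr u)) (Fo' (Cod Gr u))" using FF by (simp add: is_functor_def)
  have Gmh: "\<forall>u \<in> Ar Gr. Gm u \<in> hom C (Go (Dom Gr u)) (Go (Cod Gr u))" using F by (simp add: is_functor_def)
  have snd_eq: "\<forall>d \<in> Ob Gr. snd (Fo' d) = Comp C (g d) (f' d)" using tri by (simp add: slice_tau_def)
  have "\<forall>d \<in> Ob Gr. \<exists>k. k \<in> hom C (Go d) (fst (Fo' d)) \<and> Comp C k (f' d) = Idt C (fst (Fo' d))
         \<and> Comp C (f' d) k = Idt C (Go d)"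
  proof
    fix d assume d: "d \<in> Ob Gr"
    then have "Dom C (f' d) = fst (Fo' d)" "Cod C (f' d) = Go d" using fh by (auto simp: hom_def)
    then show "\<exists>k. k \<in> hom C (Go d) (fst (Fo' d)) \<and> Comp C k (f' d) = Idt C (fst (Fo' d))
         \<and> Comp C (f' d) k = Idt C (Go d)" using fiso d unfolding iso_def by metis
  qed
  then obtain k where k: "\<forall>d \<in> Ob Gr. k d \<in> hom C (Go d) (fst (Fo' d)) \<and> Comp C (k d) (f' d) = Idt C (fst (Fo' d))
         \<and> Comp C (f' d) (k d) = Idt C (Go d)" by metis
  define \<gamma> where "\<gamma> = (\<lambda>d. (?Fo d, k d, Fo' d))"
  have \<theta>h: "\<theta> d \<in> hom ?S (Fo' d) (?Fo d)" if d: "d \<in> Ob Gr" for d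
  proof -
    obtain S s where Sd: "Fo' d = (S, s)" by fastforce
    have "\<theta> d = ((S, s), f' d, (Go d, g d))" by (simp add: \<theta>_def Sd canFo_def)
    moreover have "((S, s), f' d, (Go d, g d)) \<in> Ar ?S"
      apply (rule slice_Ar_mem)
      using slice_Ob_props[of "Fo' d"] Fo'ob d Sd gd fh snd_eq by auto
    ultimately show ?thesis using Sd by (simp add: hom_def canFo_def)
  qed
  have \<gamma>h: "\<gamma> d \<in> hom ?S (?Fo d) (Fo' d)" if d: "d \<in> Ob Gr" for d
  proof -
    obtain S s where Sd: "Fo' d = (S, s)" by fastforce
    have "\<gamma> d = ((Go d, g d), k d, (S, s))" by (simp add: \<gamma>_def Sd canFo_def)
    moreover have "Comp C s (k d) = g d"
    proof -
      have "s = Comp C (g d) (f' d)" using snd_eq d Sd by (metis snd_conv)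
      then have "Comp C s (k d) = Comp C (Comp C (g d) (f' d)) (k d)" by simp
      also have "\<dots> = Comp C (g d) (Comp C (f' d) (k d))"
      proof -
        have kd: "k d \<in> hom C (Go d) S" and fd: "f' d \<in> hom C S (Go d)" and gdh: "g d \<in> hom C (Go d) T"
          using k fh gd d Sd by auto
        show ?thesis using cat_assoc[OF C kd fd gdh] by simp
      qed
      also have "\<dots> = g d" using k d cat_idr[OF C, of "g d" "Go d" T] gd by simp
      finally show ?thesis .
    qed
    moreover have "((Go d, g d), k d, (S, s)) \<in> Ar ?S"
      apply (rule slice_Ar_mem)
      using slice_Ob_props[of "Fo' d"] Fo'ob d Sd gd k \<open>Comp C s (k d) = g d\<close> by auto
    ultimately show ?thesis using Sd by (simp add: hom_def canFo_def)
  qed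
  have nt1: "nat_trans Gr ?S Fo' Fm' ?Fo ?Fm \<theta>"
    unfolding nat_trans_def
  proof (intro conjI ballI FF FC \<theta>h)
    fix u assume u: "u \<in> Ar Gr"
    have du: "Dom Gr u \<in> Ob Gr" "Cod Gr u \<in> Ob Gr" using u Gr by (auto simp: category_def)
    have tr: "Fm' u = (Fo' (Dom Gr u), slice_Fm (Fm' u), Fo' (Cod Gr u))"
      using slice_hom_triple[of "Fm' u" C M T] Fm'h u by blast
    have "Comp ?S (\<theta> (Cod Gr u)) (Fm' u) = (Fo' (Dom Gr u), Comp C (f' (Cod Gr u)) (slice_Fm (Fm' u)), ?Fo (Cod Gr u))"
      by (subst tr) (simp add: \<theta>_def)
    also have "\<dots> = (Fo' (Dom Gr u), Comp C (Gm u) (f' (Dom Gr u)), ?Fo (Cod Gr u))" using fnat u by simp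
    also have "\<dots> = Comp ?S (?Fm u) (\<theta> (Dom Gr u))" by (simp add: \<theta>_def canFm_def canFo_def)
    finally show "Comp ?S (\<theta> (Cod Gr u)) (Fm' u) = Comp ?S (?Fm u) (\<theta> (Dom Gr u))" .
  qed
  have nt2: "nat_trans Gr ?S ?Fo ?Fm Fo' Fm' \<gamma>"
    unfolding nat_trans_def
  proof (intro conjI ballI FF FC \<gamma>h)
    fix u assume u: "u \<in> Ar Gr"
    have du: "Dom Gr u \<in> Ob Gr" "Cod Gr u \<in> Ob Gr" using u Gr by (auto simp: category_def)
    have tr: "Fm' u = (Fo' (Dom Gr u), slice_Fm (Fm' u), Fo' (Cod Gr u))"
      using slice_hom_triple[of "Fm' u" C M T] Fm'h u by blast
    have hh: "slice_Fm (Fm' u) \<in> hom C (fst (Fo' (Dom Gr u))) (fst (Fo' (Cod Gr u)))"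
      using slice_Ar_props[of "Fm' u" C M T] Fm'h u by (auto simp: hom_def)
    have key: "Comp C (k (Cod Gr u)) (Gm u) = Comp C (slice_Fm (Fm' u)) (k (Dom Gr u))"
      apply (rule inv_nat[OF C, of "f' (Dom Gr u)" _ _ "k (Dom Gr u)" "f' (Cod Gr u)" _ _ "k (Cod Gr u)"])
      using fh k du hh Gmh u fnat by auto
    have "Comp ?S (\<gamma> (Cod Gr u)) (?Fm u) = (?Fo (Dom Gr u), Comp C (k (Cod Gr u)) (Gm u), Fo' (Cod Gr u))"
      by (simp add: \<gamma>_def canFm_def canFo_def)
    also have "\<dots> = (?Fo (Dom Gr u), Comp C (slice_Fm (Fm' u)) (k (Dom Gr u)), Fo' (Cod Gr u))" using key by simp
    also have "\<dots> = Comp ?S (Fm' u) (\<gamma> (Dom Gr u))" by (subst tr) (simp add: \<gamma>_def)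
    finally show "Comp ?S (\<gamma> (Cod Gr u)) (?Fm u) = Comp ?S (Fm' u) (\<gamma> (Dom Gr u))" .
  qed
  have c1: "grading_2cell C Gr ?S slice_Fm Fo' Fm' f' ?Fo ?Fm ?f \<theta>"
    unfolding grading_2cell_def using nt1 fh C by (auto simp: \<theta>_def canf_def intro: cat_idl)
  have c2: "grading_2cell C Gr ?S slice_Fm ?Fo ?Fm ?f Fo' Fm' f' \<gamma>"
    unfolding grading_2cell_def using nt2 k by (auto simp: \<gamma>_def canf_def)
  have c3: "\<forall>d \<in> Ob Gr. Comp ?S (\<gamma> d) (\<theta> d) = Idt ?S (Fo' d) \<and> Comp ?S (\<theta> d) (\<gamma> d) = Idt ?S (?Fo d)"
    using k by (auto simp: \<gamma>_def \<theta>_def canFo_def)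
  show ?thesis unfolding grading_inv_2cell_def \<theta>_def[symmetric] using c1 c2 c3 by blast
qed


theorem theorem2p3:
  fixes C :: "('o, 'm) cat" and M :: "'m set" and T :: 'o
  assumes "category C" and "M \<subseteq> Ar C" and "T \<in> Ob C"
  shows "grading C M T (slice C M T) slice_Fo slice_Fm slice_tau \<and>
    (\<forall>(Gr :: ('a, 'b) cat) Go Gm g. grading C M T Gr Go Gm g \<longrightarrow>
      (\<exists>Fo Fm f.
         grading_mor C Gr Go Gm g (slice C M T) slice_Fo slice_Fm slice_tau Fo Fm f \<and>
         (\<exists>\<theta> :: ('a \<Rightarrow> 'o \<times> 'm) \<times> ('b \<Rightarrow> ('o \<times> 'm) \<times> 'm \<times> ('o \<times> 'm)) \<times> ('a \<Rightarrow> 'm)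
                 \<Rightarrow> 'a \<Rightarrow> ('o \<times> 'm) \<times> 'm \<times> ('o \<times> 'm).
            (\<forall>Fo' Fm' f'.
               grading_mor C Gr Go Gm g (slice C M T) slice_Fo slice_Fm slice_tau Fo' Fm' f' \<longrightarrow>
               grading_inv_2cell C Gr (slice C M T) slice_Fm Fo' Fm' f' Fo Fm f (\<theta> (Fo', Fm', f'))) \<and>
            (\<forall>Fo' Fm' f' Fo'' Fm'' f'' \<alpha>.
               grading_mor C Gr Go Gm g (slice C M T) slice_Fo slice_Fm slice_tau Fo' Fm' f' \<longrightarrow>
               grading_mor C Gr Go Gm g (slice C M T) slice_Fo slice_Fm slice_tau Fo'' Fm'' f'' \<longrightarrow>
               grading_2cell C Gr (slice C M T) slice_Fm Fo' Fm' f' Fo'' Fm'' f'' \<alpha> \<longrightarrow>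
               (\<forall>d \<in> Ob Gr. Comp (slice C M T) (\<theta> (Fo'', Fm'', f'') d) (\<alpha> d)
                             = \<theta> (Fo', Fm', f') d)))))"
proof -
  have P1: "grading C M T (slice C M T) slice_Fo slice_Fm slice_tau"
    by (rule slice_grading[OF assms(1) assms(3)])
  show ?thesis
  proof (intro conjI P1 allI impI)
    fix Gr :: "('a, 'b) cat" and Go Gm g
    assume G: "grading C M T Gr Go Gm g"
    let ?S = "slice C M T"
    let ?\<theta> = "\<lambda>(Fo' :: 'a \<Rightarrow> 'o \<times> 'm, Fm' :: 'b \<Rightarrow> ('o \<times> 'm) \<times> 'm \<times> ('o \<times> 'm), f' :: 'a \<Rightarrow> 'm) d.
                 (Fo' d, f' d, canFo Go g d)"
    have A: "\<forall>Fo' Fm' f'.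
               grading_mor C Gr Go Gm g ?S slice_Fo slice_Fm slice_tau Fo' Fm' f' \<longrightarrow>
               grading_inv_2cell C Gr ?S slice_Fm Fo' Fm' f' (canFo Go g) (canFm Gr Go Gm g) (canf C Go) (?\<theta> (Fo', Fm', f'))"
      using theta_inv[OF assms(1) G] by simp
    have B: "\<forall>Fo' Fm' f' Fo'' Fm'' f'' \<alpha>.
               grading_mor C Gr Go Gm g ?S slice_Fo slice_Fm slice_tau Fo' Fm' f' \<longrightarrow>
               grading_mor C Gr Go Gm g ?S slice_Fo slice_Fm slice_tau Fo'' Fm'' f'' \<longrightarrow>
               grading_2cell C Gr ?S slice_Fm Fo' Fm' f' Fo'' Fm'' f'' \<alpha> \<longrightarrow>
               (\<forall>d \<in> Ob Gr. Comp ?S (?\<theta> (Fo'', Fm'', f'') d) (\<alpha> d) = ?\<theta> (Fo', Fm', f') d)"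
    proof (intro allI impI ballI)
      fix Fo' Fm' f' Fo'' Fm'' f'' \<alpha> d
      assume c: "grading_2cell C Gr ?S slice_Fm Fo' Fm' f' Fo'' Fm'' f'' \<alpha>" and d: "d \<in> Ob Gr"
      have ah: "\<alpha> d \<in> hom ?S (Fo' d) (Fo'' d)" and ac: "Comp C (f'' d) (slice_Fm (\<alpha> d)) = f' d"
        using c d by (auto simp: grading_2cell_def nat_trans_def)
      have tr: "\<alpha> d = (Fo' d, slice_Fm (\<alpha> d), Fo'' d)" using slice_hom_triple[OF ah] .
      show "Comp ?S (?\<theta> (Fo'', Fm'', f'') d) (\<alpha> d) = ?\<theta> (Fo', Fm', f') d"
        by (subst tr) (simp add: ac)
    qed
    show "\<exists>Fo Fm f.
         grading_mor C Gr Go Gm g ?S slice_Fo slice_Fm slice_tau Fo Fm f \<and>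
         (\<exists>\<theta> :: ('a \<Rightarrow> 'o \<times> 'm) \<times> ('b \<Rightarrow> ('o \<times> 'm) \<times> 'm \<times> ('o \<times> 'm)) \<times> ('a \<Rightarrow> 'm)
                 \<Rightarrow> 'a \<Rightarrow> ('o \<times> 'm) \<times> 'm \<times> ('o \<times> 'm).
            (\<forall>Fo' Fm' f'.
               grading_mor C Gr Go Gm g ?S slice_Fo slice_Fm slice_tau Fo' Fm' f' \<longrightarrow>
               grading_inv_2cell C Gr ?S slice_Fm Fo' Fm' f' Fo Fm f (\<theta> (Fo', Fm', f'))) \<and>
            (\<forall>Fo' Fm' f' Fo'' Fm'' f'' \<alpha>.
               grading_mor C Gr Go Gm g ?S slice_Fo slice_Fm slice_tau Fo' Fm' f' \<longrightarrow>
               grading_mor C Gr Go Gm g ?S slice_Fo slice_Fm slice_tau Fo'' Fm'' f'' \<longrightarrow>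
               grading_2cell C Gr ?S slice_Fm Fo' Fm' f' Fo'' Fm'' f'' \<alpha> \<longrightarrow>
               (\<forall>d \<in> Ob Gr. Comp ?S (\<theta> (Fo'', Fm'', f'') d) (\<alpha> d)
                             = \<theta> (Fo', Fm', f') d)))"
      using can_mor[OF assms(1) G] A B by blast
  qed
qed

end
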